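(* Let $\hat H$, $\tilde\tau>0$ and $\Phi$ be as in the context, and let $\alpha,\beta\in\mathbb{R}$ satisfy $|\alpha|+|\beta|<1$. Then every root $w$ of $\Phi(w)=0$ satisfies $\operatorname{Re} w<0$; i.e. the equilibrium is locally asymptotically stable, regardless of the delay kernel and of $\tilde\tau$.
   Context: Let $g:[0,\infty)\to[0,\infty)$ be a probability density with mean $\int_0^\infty t\,g(t)\,dt=1$ (or the Dirac measure at $1$), and let $\hat H(w)=\int_0^\infty g(s)e^{-ws}\,ds$; then $\hat H(0)=1$, $\hat H'(0)=-1$, and $|\hat H(w)|\le 1$ for $\operatorname{Re} w\ge 0$. The delay kernel with mean $\tau>0$ is $h(t)=\tau^{-1}g(t/\tau)$. For a time constant $\bar\tau>0$ put $\tilde\tau=\tau/\bar\tau$. For $\alpha,\beta\in\mathbb{R}$ the (rescaled) characteristic equation of the linearized coupled Wilson–Cowan system is $$\Phi(w):=(w+\tilde\tau)^4-\alpha\,\tilde\tau^2(w+\tilde\tau)^2\hat H(w)^2+\beta\,\tilde\tau^4\hat H(w)^4=0,$$ equivalently $Q(w)^2-\alpha Q(w)+\beta=0$ with $Q(w)=\big(\frac{w+\tilde\tau}{\tilde\tau\hat H(w)}\big)^2$. The equilibrium is locally asymptotically stable iff all roots have negative real part. *)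

theory Defs
  imports "HOL-Analysis.Analysis"
begin

definition mean_one_density :: "(real \<Rightarrow> real) \<Rightarrow> bool" where
  "mean_one_density g \<longleftrightarrow>
     g \<in> borel_measurable lborel \<and>
     (\<forall>s\<ge>0. g s \<ge> 0) \<and>
     set_integrable lborel {0..} g \<and>
     (LINT s:{0..}|lborel. g s) = 1 \<and>
     set_integrable lborel {0..} (\<lambda>s. s * g s) \<and>
     (LINT s:{0..}|lborel. s * g s) = 1"

definition laplace_density :: "(real \<Rightarrow> real) \<Rightarrow> complex \<Rightarrow> complex" where
  "laplace_density g w = (LINT s:{0..}|lborel. complex_of_real (g s) * exp (- (w * complex_of_real s)))"

text \<open>Hhat is the Laplace transform of an admissible kernel: either of a mean-one
  probability density, or of the Dirac measure at 1 (giving exp(-w)).\<close>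
definition admissible_Hhat :: "(complex \<Rightarrow> complex) \<Rightarrow> bool" where
  "admissible_Hhat H \<longleftrightarrow>
     (\<exists>g. mean_one_density g \<and> (\<forall>w. Re w \<ge> 0 \<longrightarrow> H w = laplace_density g w))
     \<or> (\<forall>w. Re w \<ge> 0 \<longrightarrow> H w = exp (- w))"

definition Phi :: "(complex \<Rightarrow> complex) \<Rightarrow> real \<Rightarrow> real \<Rightarrow> real \<Rightarrow> complex \<Rightarrow> complex" where
  "Phi H tt \<alpha> \<beta> w =
     (w + of_real tt) ^ 4
     - of_real \<alpha> * of_real tt ^ 2 * (w + of_real tt) ^ 2 * H w ^ 2
     + of_real \<beta> * of_real tt ^ 4 * H w ^ 4"

end

theory Submission
  imports Defs
begin

lemma laplace_bound:
  assumes g: "mean_one_density g" and w: "Re w \<ge> 0"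
  shows "norm (laplace_density g w) \<le> 1"
proof -
  define F where "F = (\<lambda>s::real. indicator {0..} s *\<^sub>R (complex_of_real (g s) * exp (- (w * complex_of_real s))))"
  define G where "G = (\<lambda>s::real. indicator {0..} s *\<^sub>R g s)"
  have ld: "laplace_density g w = integral\<^sup>L lborel F"
    unfolding laplace_density_def F_def set_lebesgue_integral_def by simp
  have Gi: "integrable lborel G" using g unfolding mean_one_density_def set_integrable_def G_def by simp
  have G1: "integral\<^sup>L lborel G = 1" using g unfolding mean_one_density_def set_lebesgue_integral_def G_def by simp
  have nb: "norm (F s) \<le> G s" for s
  proof (cases "s \<ge> 0")
    case True
    have "g s \<ge> 0" using g True unfolding mean_one_density_def by simp
    moreover have "norm (exp (- (w * complex_of_real s))) \<le> 1"
      using True w by (simp add: norm_exp_eq_Re mult_nonneg_nonneg)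
    ultimately have "norm (complex_of_real (g s) * exp (- (w * complex_of_real s))) \<le> g s"
      by (simp add: norm_mult mult_left_le)
    then show ?thesis using True by (simp add: F_def G_def)
  next
    case False then show ?thesis by (simp add: F_def G_def)
  qed
  show ?thesis
  proof (cases "integrable lborel F")
    case True
    have "norm (integral\<^sup>L lborel F) \<le> integral\<^sup>L lborel G"
      by (rule Bochner_Integration.integral_norm_bound_integral[OF True Gi nb])
    then show ?thesis using ld G1 by simp
  next
    case False then show ?thesis using ld by (simp add: not_integrable_integral_eq)
  qed
qed

lemma Hbound:
  assumes "admissible_Hhat H" "Re w \<ge> 0"
  shows "norm (H w) \<le> 1"
  using assms laplace_bound unfolding admissible_Hhat_def
  by (auto simp: norm_exp_eq_Re)

theorem theorem4:
  fixes H :: "complex \<Rightarrow> complex" and tt \<alpha> \<beta> :: real and w :: complex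
  assumes "admissible_Hhat H"
    and "tt > 0"
    and "\<bar>\<alpha>\<bar> + \<bar>\<beta>\<bar> < 1"
    and "Phi H tt \<alpha> \<beta> w = 0"
  shows "Re w < 0"
proof (rule ccontr)
  assume "\<not> Re w < 0"
  hence w: "Re w \<ge> 0" by simp
  define a where "a = w + of_real tt"
  define h where "h = of_real tt * H w"
  have "norm h \<le> tt" using Hbound[OF assms(1) w] assms(2)
    by (simp add: h_def norm_mult mult_left_le)
  moreover have "tt \<le> norm a"
  proof -
    have "tt \<le> Re a" using w by (simp add: a_def)
    also have "\<dots> \<le> norm a" by (rule complex_Re_le_cmod)
    finally show ?thesis .
  qed
  ultimately have ha: "norm h \<le> norm a" and ap: "norm a > 0" using assms(2) by auto
  have eq: "a^4 = of_real \<alpha> * a^2 * h^2 - of_real \<beta> * h^4"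
    using assms(4) unfolding Phi_def a_def h_def by (simp add: algebra_simps power_mult_distrib)
  have "norm a ^ 4 = norm (of_real \<alpha> * a^2 * h^2 - of_real \<beta> * h^4)"
    by (metis eq norm_power)
  also have "\<dots> \<le> \<bar>\<alpha>\<bar> * norm a ^ 2 * norm h ^ 2 + \<bar>\<beta>\<bar> * norm h ^ 4"
    by (rule order_trans[OF norm_triangle_ineq4]) (simp add: norm_mult norm_power)
  also have "\<dots> \<le> \<bar>\<alpha>\<bar> * norm a ^ 4 + \<bar>\<beta>\<bar> * norm a ^ 4"
  proof -
    have "norm h ^ 2 \<le> norm a ^ 2" "norm h ^ 4 \<le> norm a ^ 4"
      using ha by (auto intro: power_mono)
    moreover have "norm a ^ 4 = norm a ^ 2 * norm a ^ 2" by simp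
    ultimately have "\<bar>\<alpha>\<bar> * norm a ^ 2 * norm h ^ 2 \<le> \<bar>\<alpha>\<bar> * norm a ^ 4"
          "\<bar>\<beta>\<bar> * norm h ^ 4 \<le> \<bar>\<beta>\<bar> * norm a ^ 4"
      by (auto simp only: mult.assoc intro!: mult_left_mono zero_le_power2 abs_ge_zero)
    thus ?thesis by simp
  qed
  also have "\<dots> < norm a ^ 4"
    using assms(3) ap by (simp add: distrib_right[symmetric])
  finally show False by simp
qed

end
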